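(* Let $p\in(0,1)$. There exists a constant $C_1<\infty$ depending only on $p$ such that the following holds. For every $n\in\mathbb{N}$, let $\xi_1,\dots,\xi_n$ be independent Bernoulli random variables with parameter $p$, and identify a realization with the set $\{i\in[1,n]_{\mathbb{Z}}:\xi_i=1\}$. Then for every Sperner family $\mathcal{A}_n$ of subsets of $[1,n]_{\mathbb{Z}}$, regarded as the event $\{\{i:\xi_i=1\}\in\mathcal{A}_n\}$, we have $\mathbb{P}[\mathcal{A}_n]\le C_1/\sqrt{n}$.
   Context: $[1,n]_{\mathbb{Z}}=\{1,\dots,n\}$. A collection $\mathcal{A}_n$ of subsets of $[1,n]_{\mathbb{Z}}$ is called a Sperner family if for each $A\in\mathcal{A}_n$ at least one of the following holds: (1) there exists $B_A\subset[1,n]_{\mathbb{Z}}\setminus A$ with $|B_A|\ge n/2$ such that every $A'\supset A$ with $A'\cap B_A\neq\emptyset$ satisfies $A'\notin\mathcal{A}_n$; (2) there exists $B'_A\subset A$ with $|B'_A|\ge n/2$ such that every $A'\subset A$ with $B'_A\setminus A'\ne\emptyset$ satisfies $A'\notin\mathcal{A}_n$. *)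

theory Defs
  imports Complex_Main
begin

definition sperner_family :: "nat \<Rightarrow> nat set set \<Rightarrow> bool" where
  "sperner_family n \<A> \<longleftrightarrow>
     \<A> \<subseteq> Pow {1..n} \<and>
     (\<forall>A\<in>\<A>.
        (\<exists>B. B \<subseteq> {1..n} - A \<and> real (card B) \<ge> real n / 2 \<and>
             (\<forall>A'. A \<subseteq> A' \<and> A' \<inter> B \<noteq> {} \<longrightarrow> A' \<notin> \<A>))
      \<or> (\<exists>B'. B' \<subseteq> A \<and> real (card B') \<ge> real n / 2 \<and>
             (\<forall>A'. A' \<subseteq> A \<and> B' - A' \<noteq> {} \<longrightarrow> A' \<notin> \<A>)))"

text \<open>Probability that the random set {i \<in> {1..n}. xi_i = 1}, with xi_1..xi_n
  i.i.d. Bernoulli(p), lies in the family \<A> (product measure written out).\<close>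
definition bernoulli_set_prob :: "real \<Rightarrow> nat \<Rightarrow> nat set set \<Rightarrow> real" where
  "bernoulli_set_prob p n \<A> =
     (\<Sum>S\<in>\<A> \<inter> Pow {1..n}. p ^ card S * (1 - p) ^ (n - card S))"

end

theory Submission
  imports Defs "HOL-Combinatorics.Multiset_Permutations"
begin


definition bin :: "real \<Rightarrow> nat \<Rightarrow> nat \<Rightarrow> real" where
  "bin p n k = real (n choose k) * p ^ k * (1 - p) ^ (n - k)"

lemma bin_nonneg: "0 \<le> p \<Longrightarrow> p \<le> 1 \<Longrightarrow> 0 \<le> bin p n k"
  by (simp add: bin_def)

lemma bin_sum: "(\<Sum>k\<le>n. bin p n k) = 1"
  using binomial_ring[of p "1 - p" n] by (simp add: bin_def mult.assoc)

lemma bin_le1: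
  assumes "0 \<le> p" "p \<le> 1" "k \<le> n" shows "bin p n k \<le> 1"
proof -
  have "bin p n k \<le> (\<Sum>k\<le>n. bin p n k)"
    by (rule member_le_sum) (use assms bin_nonneg in auto)
  thus ?thesis by (simp add: bin_sum)
qed

lemma choose_ratio: "j < n \<Longrightarrow> (n choose Suc j) * Suc j = (n choose j) * (n - j)"
  by (metis Suc_times_binomial_eq binomial_absorb_comp Suc_diff_1 less_imp_le_nat
      mult.commute zero_less_iff_neq_zero not_less0 gr0I)

lemma bin_ratio:
  fixes p :: real
  assumes "j < n"
  shows "bin p n (Suc j) * (Suc j) * (1 - p) = bin p n j * (n - j) * p"
proof -
  have e: "n - j = Suc (n - Suc j)" using assms by simp
  have "real ((n choose Suc j) * Suc j) = real ((n choose j) * (n - j))"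
    using choose_ratio[OF assms] by simp
  hence c: "real (n choose Suc j) * real (Suc j) = real (n choose j) * real (n - j)"
    by (simp only: of_nat_mult)
  have "bin p n (Suc j) * (Suc j) * (1 - p)
      = (real (n choose Suc j) * real (Suc j)) * (p ^ j * p * (1 - p) ^ (n - Suc j) * (1 - p))"
    by (simp add: bin_def algebra_simps)
  also have "\<dots> = (real (n choose j) * real (n - j)) * (p ^ j * (1 - p) ^ (n - j) * p)"
    by (simp only: c e power_Suc) (simp add: algebra_simps)
  also have "\<dots> = bin p n j * (n - j) * p" using assms by (simp add: bin_def algebra_simps)
  finally show ?thesis .
qed

lemma bin_step:
  fixes p t :: real and n j :: nat
  assumes p: "0 < p" "p < 1" and jn: "j < n" and t: "0 \<le> t"
    and jb: "real j \<le> (real n + 1) * p + t"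
  shows "bin p n (Suc j) \<ge> (1 - (t + 1) / ((real n + 1) * (p * (1 - p)))) * bin p n j"
proof -
  define q where "q = 1 - p"
  define e where "e = (t + 1) / ((real n + 1) * (p * q))"
  have q: "0 < q" using p by (simp add: q_def)
  have pq: "0 < (real n + 1) * (p * q)" using p q by simp
  have e0: "0 \<le> e" unfolding e_def using pq t by simp
  have eq: "e * ((real n + 1) * (p * q)) = t + 1" unfolding e_def using pq by (simp add: field_simps)
  have key: "(real n - j) * p \<ge> (1 - e) * (Suc j) * q"
  proof (cases "real (Suc j) \<le> (real n + 1) * p")
    case True
    have "(real n - j) * p - (Suc j) * q = (real n + 1) * p - Suc j" by (simp add: q_def algebra_simps)
    hence "(real n - j) * p \<ge> (Suc j) * q" using True by linarith
    moreover have "(1 - e) * (Suc j) * q \<le> (Suc j) * q" using e0 q by (simp add: mult_le_cancel_right1)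
    ultimately show ?thesis by linarith
  next
    case False
    have "e * (Suc j * q) \<ge> e * ((real n + 1) * p * q)"
      using False e0 q by (intro mult_left_mono mult_right_mono) (auto simp: algebra_simps)
    hence "e * (Suc j * q) \<ge> t + 1" using eq by (simp add: algebra_simps)
    moreover have "(real n - j) * p - (Suc j) * q = (real n + 1) * p - Suc j" by (simp add: q_def algebra_simps)
    moreover have "(1 - e) * (Suc j) * q = Suc j * q - e * (Suc j * q)" by (simp add: algebra_simps)
    ultimately show ?thesis using jb by linarith
  qed
  have r: "bin p n (Suc j) * (Suc j) * q = bin p n j * (real n - j) * p"
    using bin_ratio[OF jn, of p] jn by (simp add: q_def of_nat_diff)
  have b0: "0 \<le> bin p n j" using p bin_nonneg by simp
  have "bin p n (Suc j) * ((Suc j) * q) \<ge> ((1 - e) * bin p n j) * ((Suc j) * q)"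
    using r key b0 mult_left_mono[OF key b0] by (simp add: algebra_simps)
  hence "bin p n (Suc j) \<ge> (1 - e) * bin p n j"
    using q by (simp add: mult_le_cancel_right)
  thus ?thesis by (simp add: e_def q_def add.commute)
qed

lemma bin_bound_left:
  fixes p :: real and n k :: nat
  assumes p: "0 < p" "p < 1" and big: "16 \<le> p * (1 - p) * n" and kn: "k \<le> n"
    and kp: "real k \<le> (real n + 1) * p"
  shows "bin p n k \<le> 8 / sqrt (p * (1 - p) * n)"
proof -
  define c where "c = p * (1 - p)"
  define s where "s = sqrt (c * n)"
  define t where "t = nat \<lfloor>s / 4\<rfloor>"
  define e where "e = (real t + 1) / ((real n + 1) * c)"
  have c0: "0 < c" using p by (simp add: c_def)
  have cq: "c \<le> 1 - p" using p by (simp add: c_def mult_le_cancel_right1)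
  have s2: "s * s = c * n" unfolding s_def using c0 by simp
  have "16 \<le> c * n" using big by (simp add: c_def)
  have s4: "4 \<le> s"
  proof -
    have "sqrt 16 \<le> sqrt (c * real n)" using \<open>16 \<le> c * n\<close> by (rule real_sqrt_le_mono)
    moreover have "sqrt (16::real) = 4" by (simp add: real_sqrt_unique)
    ultimately show ?thesis by (simp add: s_def)
  qed
  have t1: "real t \<le> s / 4" unfolding t_def using s4 by linarith
  have t2: "s / 4 < real t + 1" unfolding t_def using s4 by linarith
  have t3: "real t + 1 \<le> s / 2" using t1 s4 by linarith
  have t4: "(real t + 1) * (real t + 1) \<le> c * n / 4"
  proof -
    have "(real t + 1) * (real t + 1) \<le> (s/2) * (s/2)"
      using t3 by (intro mult_mono) auto
    thus ?thesis using s2 by simp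
  qed
  have n1c: "c * n \<le> (real n + 1) * c" using c0 by (simp add: algebra_simps)
  have den: "0 < (real n + 1) * c" using c0 by simp
  have te: "(real t + 1) * e \<le> 1 / 4"
  proof -
    have "(real t + 1) * e = (real t + 1) * (real t + 1) / ((real n + 1) * c)"
      by (simp add: e_def)
    also have "\<dots> \<le> (c * n / 4) / ((real n + 1) * c)"
      using t4 den by (intro divide_right_mono) auto
    also have "\<dots> \<le> 1 / 4" using n1c den by (simp add: field_simps)
    finally show ?thesis .
  qed
  have e0: "0 \<le> e" unfolding e_def using den by simp
  have "e \<le> (real t + 1) * e" using e0 by (simp add: algebra_simps)
  hence e1: "e \<le> 1 / 4" using te by linarith
  have ie: "real i * e \<le> 1/4" if "i \<le> t" for i
  proof -
    have "real i * e \<le> (real t + 1) * e" using that e0 by (intro mult_right_mono) auto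
    thus ?thesis using te by linarith
  qed
  have kt: "k + t \<le> n"
  proof -
    have "4 * s \<le> s * s" using mult_right_mono[OF s4, of s] s4 by simp
    hence "s \<le> s * s / 4" by simp
    hence "real t \<le> c * n / 16" using t1 s2 by simp
    also have "\<dots> \<le> (1 - p) * n / 16" using cq by (simp add: mult_right_mono)
    finally have a: "real t \<le> (1 - p) * n / 16" .
    have b: "16 \<le> (1 - p) * n" using \<open>16 \<le> c * n\<close> mult_right_mono[OF cq, of "real n"]
      by simp
    have "real k + real t \<le> n" using kp a b p by (simp add: algebra_simps)
    thus ?thesis by linarith
  qed
  have bk0: "0 \<le> bin p n k" using p bin_nonneg by simp
  have ind: "i \<le> t \<Longrightarrow> bin p n (k + i) \<ge> (1 - real i * e) * bin p n k" for i
  proof (induction i)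
    case 0 thus ?case by simp
  next
    case (Suc i)
    hence IH: "bin p n (k + i) \<ge> (1 - real i * e) * bin p n k" by simp
    have jn: "k + i < n" using Suc.prems kt by simp
    have jb: "real (k + i) \<le> (real n + 1) * p + real t" using kp Suc.prems by simp
    have st: "bin p n (Suc (k + i)) \<ge> (1 - (real t + 1) / ((real n + 1) * (p * (1 - p)))) * bin p n (k + i)"
      using bin_step[OF p jn _ jb] by simp
    hence st': "bin p n (Suc (k + i)) \<ge> (1 - e) * bin p n (k + i)" by (simp add: e_def c_def)
    have "(1 - e) * bin p n (k + i) \<ge> (1 - e) * ((1 - real i * e) * bin p n k)"
      using IH e1 by (intro mult_left_mono) auto
    moreover have "(1 - e) * ((1 - real i * e) * bin p n k) \<ge> (1 - real (Suc i) * e) * bin p n k"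
    proof -
      have "(1 - e) * (1 - real i * e) \<ge> 1 - real (Suc i) * e"
        using e0 by (simp add: algebra_simps)
      thus ?thesis using bk0 by (metis mult.assoc mult_right_mono)
    qed
    ultimately show ?case using st' by simp
  qed
  have "(\<Sum>i\<le>t. (1/2) * bin p n k) \<le> (\<Sum>i\<le>t. bin p n (k + i))"
  proof (rule sum_mono)
    fix i assume "i \<in> {..t}"
    hence "i \<le> t" by simp
    hence "(1/2) * bin p n k \<le> (1 - real i * e) * bin p n k"
      using ie[of i] bk0 by (intro mult_right_mono) auto
    thus "(1/2) * bin p n k \<le> bin p n (k + i)" using ind[OF \<open>i \<le> t\<close>] by linarith
  qed
  also have "(\<Sum>i\<le>t. bin p n (k + i)) = (\<Sum>j\<in>(\<lambda>i. k + i) ` {..t}. bin p n j)"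
    by (subst sum.reindex) (auto simp: inj_on_def)
  also have "\<dots> \<le> (\<Sum>j\<le>n. bin p n j)"
    by (rule sum_mono2) (use kt p bin_nonneg in auto)
  also have "\<dots> = 1" by (rule bin_sum)
  finally have "(real t + 1) * bin p n k \<le> 2" by (simp add: add.commute)
  hence "bin p n k \<le> 2 / (real t + 1)" by (simp add: field_simps)
  also have "\<dots> \<le> 2 / (s / 4)" using t2 s4 by (intro divide_left_mono) auto
  also have "\<dots> = 8 / sqrt (p * (1 - p) * n)" by (simp add: s_def c_def)
  finally show ?thesis .
qed

lemma bin_bound:
  fixes p :: real and n k :: nat
  assumes p: "0 < p" "p < 1" and n: "1 \<le> n" and kn: "k \<le> n"
  shows "bin p n k \<le> 8 / sqrt (p * (1 - p) * n)"
proof -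
  have c0: "0 < p * (1 - p) * n" using p n by simp
  show ?thesis
  proof (cases "16 \<le> p * (1 - p) * n")
    case False
    have "sqrt (p * (1 - p) * n) < sqrt 16" using False by (subst real_sqrt_less_iff) simp
    moreover have "sqrt (16::real) = 4" by (simp add: real_sqrt_unique)
    ultimately have "sqrt (p * (1 - p) * n) < 4" by simp
    moreover have "0 < sqrt (p * (1 - p) * n)" using c0 by simp
    ultimately have "1 \<le> 8 / sqrt (p * (1 - p) * n)" by (simp add: field_simps)
    moreover have "bin p n k \<le> 1" using bin_le1[of p k n] p kn by simp
    ultimately show ?thesis by linarith
  next
    case big: True
    show ?thesis
    proof (cases "real k \<le> (real n + 1) * p")
      case True
      thus ?thesis using bin_bound_left[OF p big kn] by simp
    next
      case False
      have q: "0 < 1 - p" "1 - p < 1" using p by auto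
      have big': "16 \<le> (1 - p) * (1 - (1 - p)) * n" using big by (simp add: algebra_simps)
      have k': "real (n - k) \<le> (real n + 1) * (1 - p)" using False kn
        by (simp add: of_nat_diff algebra_simps)
      have "bin (1 - p) n (n - k) \<le> 8 / sqrt ((1 - p) * (1 - (1 - p)) * n)"
        using bin_bound_left[OF q big' _ k'] by simp
      moreover have "bin (1 - p) n (n - k) = bin p n k"
        using kn by (simp add: bin_def binomial_symmetric[OF kn, symmetric] algebra_simps)
      ultimately show ?thesis by (simp add: algebra_simps)
    qed
  qed
qed



lemma card_T:
  fixes U A :: "'a set" and Bs :: "'a set"
  assumes fin: "finite U" and AU: "A \<subseteq> U" and BU: "Bs \<subseteq> U - A"
  shows "card (permutations_of_set A \<times> Sigma Bs (\<lambda>b. permutations_of_set (U - A - {b})))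
         = fact (card A) * (card Bs * fact (card U - card A - 1))"
proof -
  have fA: "finite A" using fin AU finite_subset by blast
  have fB: "finite Bs" using fin BU finite_subset by blast
  have cb: "card (U - A - {b}) = card U - card A - 1" if "b \<in> Bs" for b
  proof -
    have "card (U - A - {b}) = card (U - A) - 1" using that BU fin by (subst card_Diff_singleton) auto
    also have "card (U - A) = card U - card A" using AU fin by (simp add: card_Diff_subset fA)
    finally show ?thesis .
  qed
  have "card (Sigma Bs (\<lambda>b. permutations_of_set (U - A - {b}))) = (\<Sum>b\<in>Bs. fact (card U - card A - 1))"
    using fB fin by (subst card_SigmaI) (auto simp: cb)
  thus ?thesis using fA by (simp add: card_cartesian_product)
qed

lemma K_lower:
  fixes U A :: "'a set" and Bs :: "'a set"
  assumes fin: "finite U" and AU: "A \<subseteq> U" and BU: "Bs \<subseteq> U - A"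
  shows "fact (card A) * (card Bs * fact (card U - card A - 1))
     \<le> card {xs \<in> permutations_of_set U. set (take (card A) xs) = A \<and> xs ! card A \<in> Bs}"
proof -
  define T where "T = permutations_of_set A \<times> Sigma Bs (\<lambda>b. permutations_of_set (U - A - {b}))"
  define f where "f = (\<lambda>(ys, b, zs). ys @ b # (zs :: 'a list))"
  have fA: "finite A" using fin AU finite_subset by blast
  have lenA: "length ys = card A" if "ys \<in> permutations_of_set A" for ys
    using that length_finite_permutations_of_set by blast
  have inj: "inj_on f T"
  proof (rule inj_onI)
    fix x y assume x: "x \<in> T" and y: "y \<in> T" and e: "f x = f y"
    obtain ys b zs where xe: "x = (ys, b, zs)" by (cases x) auto
    obtain ys' b' zs' where ye: "y = (ys', b', zs')" by (cases y) auto
    have l: "length ys = length ys'" using x y xe ye lenA unfolding T_def by auto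
    have "ys @ b # zs = ys' @ b' # zs'" using e xe ye by (simp add: f_def)
    thus "x = y" using l xe ye by auto
  qed
  have sub: "f ` T \<subseteq> {xs \<in> permutations_of_set U. set (take (card A) xs) = A \<and> xs ! card A \<in> Bs}"
  proof
    fix xs assume "xs \<in> f ` T"
    then obtain ys b zs where ys: "ys \<in> permutations_of_set A" and b: "b \<in> Bs"
      and zs: "zs \<in> permutations_of_set (U - A - {b})" and xs: "xs = ys @ b # zs"
      unfolding T_def f_def by auto
    have sy: "set ys = A" "distinct ys" using ys permutations_of_setD by auto
    have sz: "set zs = U - A - {b}" "distinct zs" using zs permutations_of_setD by auto
    have l: "length ys = card A" using lenA ys by simp
    have bA: "b \<in> U" "b \<notin> A" using b BU by auto
    have "set xs = U" using sy sz bA AU xs by auto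
    moreover have "distinct xs" using sy sz bA xs by auto
    moreover have "take (card A) xs = ys" using l xs by simp
    moreover have "xs ! card A = b" using l xs by (simp add: nth_append)
    ultimately show "xs \<in> {xs \<in> permutations_of_set U. set (take (card A) xs) = A \<and> xs ! card A \<in> Bs}"
      using sy b by (auto intro: permutations_of_setI)
  qed
  have "card T = card (f ` T)" using inj by (simp add: card_image)
  also have "\<dots> \<le> card {xs \<in> permutations_of_set U. set (take (card A) xs) = A \<and> xs ! card A \<in> Bs}"
    by (rule card_mono) (use sub in auto)
  finally show ?thesis using card_T[OF fin AU BU] by (simp add: T_def)
qed

lemma chain_sum:
  fixes U :: "'a set" and F :: "'a set set" and B :: "'a set \<Rightarrow> 'a set"
  assumes fin: "finite U" and FU: "F \<subseteq> Pow U" and n: "card U = n" "1 \<le> n"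
    and BA: "\<And>A. A \<in> F \<Longrightarrow> B A \<subseteq> U - A \<and> real n / 2 \<le> real (card (B A))"
    and kill: "\<And>A A'. A \<in> F \<Longrightarrow> A' \<in> F \<Longrightarrow> A \<subseteq> A' \<Longrightarrow> A' \<inter> B A = {}"
  shows "(\<Sum>A\<in>F. 1 / real (n choose card A)) \<le> 2"
proof -
  define P where "P = permutations_of_set U"
  define K where "K = (\<lambda>A. {xs \<in> P. set (take (card A) xs) = A \<and> xs ! card A \<in> B A})"
  have finF: "finite F" by (rule finite_subset[OF FU]) (simp add: fin)
  have AU: "A \<subseteq> U" if "A \<in> F" for A using FU that by auto
  have kn: "card A < n" if "A \<in> F" for A
  proof -
    have "0 < card (B A)" using BA[OF that] n by linarith
    hence "B A \<noteq> {}" by auto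
    then obtain b where "b \<in> B A" by blast
    hence "A \<subset> U" using BA[OF that] AU[OF that] by blast
    from psubset_card_mono[OF fin this] show ?thesis using n by simp
  qed
  have KD: "xs \<in> P" "set (take (card A) xs) = A" "xs ! card A \<in> B A" if "xs \<in> K A" for xs A
    using that unfolding K_def by (simp_all only: mem_Collect_eq)
  have lenP: "length xs = n" if "xs \<in> P" for xs
    using that n length_finite_permutations_of_set unfolding P_def by blast
  have disj0: "K A \<inter> K A' = {}" if "A \<in> F" "A' \<in> F" "A \<noteq> A'" "card A \<le> card A'" for A A'
  proof (rule ccontr)
    assume "K A \<inter> K A' \<noteq> {}"
    then obtain xs where xs: "xs \<in> K A" "xs \<in> K A'" by blast
    have l: "length xs = n" using lenP KD(1)[OF xs(1)] .
    have tt: "take (card A) (take (card A') xs) = take (card A) xs" using that(4) by (simp add: min_def)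
    note e1 = KD(2)[OF xs(1)] KD(2)[OF xs(2)]
    have "A \<subseteq> A'" using set_take_subset[of "card A" "take (card A') xs"] by (simp only: tt e1)
    have "card A \<noteq> card A'"
    proof
      assume "card A = card A'"
      hence "A = A'" using e1 by metis
      thus False using that(3) by simp
    qed
    hence lt: "card A < card A'" using that(4) by simp
    have "card A' \<le> n" using kn[OF that(2)] by simp
    have "xs ! card A \<in> set (take (card A') xs)"
    proof -
      have "card A < length (take (card A') xs)" using lt l \<open>card A' \<le> n\<close> by simp
      hence "take (card A') xs ! card A \<in> set (take (card A') xs)" by (rule nth_mem)
      thus ?thesis using lt by simp
    qed
    hence "xs ! card A \<in> A'" using e1(2) by (simp only:)
    moreover have "xs ! card A \<in> B A" using KD(3)[OF xs(1)] .
    ultimately show False using kill[OF that(1,2) \<open>A \<subseteq> A'\<close>] by blast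
  qed
  have disj: "K A \<inter> K A' = {}" if "A \<in> F" "A' \<in> F" "A \<noteq> A'" for A A'
  proof (cases "card A \<le> card A'")
    case True thus ?thesis using disj0[OF that True] by simp
  next
    case False
    hence "card A' \<le> card A" by simp
    from disj0[OF that(2,1) _ this] that(3) show ?thesis by blast
  qed
  have finK: "finite (K A)" for A unfolding K_def P_def by simp
  have "(\<Sum>A\<in>F. real (card (K A))) = real (card (\<Union>A\<in>F. K A))"
    using card_UN_disjoint[OF finF, of K] finK disj by simp
  also have "\<dots> \<le> real (card P)"
    by (subst of_nat_le_iff, rule card_mono) (auto simp: P_def K_def)
  also have "\<dots> = fact n" using fin n by (simp add: P_def)
  finally have S: "(\<Sum>A\<in>F. real (card (K A))) \<le> fact n" .
  have each: "1 / real (n choose card A) \<le> 2 * real (card (K A)) / fact n" if "A \<in> F" for A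
  proof -
    define k where "k = card A"
    have k: "k < n" using kn[OF that] by (simp add: k_def)
    have "fact k * (card (B A) * fact (n - k - 1)) \<le> card (K A)"
      using K_lower[OF fin AU[OF that], of "B A"] BA[OF that] n unfolding K_def P_def k_def by simp
    hence "real (fact k * (card (B A) * fact (n - k - 1))) \<le> real (card (K A))"
      by (simp only: of_nat_le_iff)
    hence L: "(fact k * (real (card (B A)) * fact (n - k - 1)) :: real) \<le> real (card (K A))"
      by (simp only: of_nat_mult of_nat_fact)
    have nk: "n - k = Suc (n - k - 1)" using k by simp
    have "(fact k * fact (n - k) :: real) = fact k * fact (n - k - 1) * real (n - k)"
    proof -
      have "(fact (Suc (n - k - 1)) :: real) = real (Suc (n - k - 1)) * fact (n - k - 1)"
        by (rule fact_Suc)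
      hence "(fact (n - k) :: real) = real (n - k) * fact (n - k - 1)" by (simp only: nk[symmetric])
      thus ?thesis by (simp add: algebra_simps)
    qed
    also have "\<dots> \<le> fact k * fact (n - k - 1) * real n" by (intro mult_left_mono) auto
    also have "\<dots> \<le> fact k * fact (n - k - 1) * (2 * real (card (B A)))"
      using BA[OF that] by (intro mult_left_mono) auto
    also have "\<dots> \<le> 2 * real (card (K A))" using L by (simp add: algebra_simps)
    finally have M: "(fact k * fact (n - k) :: real) \<le> 2 * real (card (K A))" .
    have "1 / real (n choose k) = fact k * fact (n - k) / fact n"
      using k by (simp add: binomial_fact)
    also have "\<dots> \<le> 2 * real (card (K A)) / fact n" using M by (intro divide_right_mono) auto
    finally show ?thesis by (simp add: k_def)
  qed
  have "(\<Sum>A\<in>F. 1 / real (n choose card A)) \<le> (\<Sum>A\<in>F. 2 * real (card (K A)) / fact n)"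
    using each by (rule sum_mono)
  also have "\<dots> = 2 * (\<Sum>A\<in>F. real (card (K A))) / fact n"
    by (simp add: sum_divide_distrib sum_distrib_left)
  also have "\<dots> \<le> 2 * fact n / fact n" using S by (intro divide_right_mono) auto
  also have "\<dots> = 2" by simp
  finally show ?thesis .
qed



lemma family_sum:
  fixes \<A> :: "nat set set"
  assumes sp: "sperner_family n \<A>" and n: "1 \<le> n"
  shows "(\<Sum>A\<in>\<A>. 1 / real (n choose card A)) \<le> 4"
proof -
  define U where "U = {1..n}"
  have fin: "finite U" and cU: "card U = n" by (simp_all add: U_def)
  have AP: "\<A> \<subseteq> Pow U" using sp by (simp add: sperner_family_def U_def)
  have finA: "finite \<A>" by (rule finite_subset[OF AP]) (simp add: fin)
  define c1 where "c1 = (\<lambda>A B. B \<subseteq> U - A \<and> real n / 2 \<le> real (card B) \<and>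
             (\<forall>A'. A \<subseteq> A' \<and> A' \<inter> B \<noteq> {} \<longrightarrow> A' \<notin> \<A>))"
  define c2 where "c2 = (\<lambda>A B'. B' \<subseteq> A \<and> real n / 2 \<le> real (card B') \<and>
             (\<forall>A'. A' \<subseteq> A \<and> B' - A' \<noteq> {} \<longrightarrow> A' \<notin> \<A>))"
  have alt: "\<And>A. A \<in> \<A> \<Longrightarrow> (\<exists>B. c1 A B) \<or> (\<exists>B'. c2 A B')"
    using sp unfolding sperner_family_def c1_def c2_def U_def by blast
  define F1 where "F1 = {A \<in> \<A>. \<exists>B. c1 A B}"
  define F2 where "F2 = \<A> - F1"
  define B1 where "B1 = (\<lambda>A. SOME B. c1 A B)"
  have B1: "c1 A (B1 A)" if "A \<in> F1" for A
    using that unfolding F1_def B1_def by (auto intro: someI_ex)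
  have S1: "(\<Sum>A\<in>F1. 1 / real (n choose card A)) \<le> 2"
  proof (rule chain_sum[OF fin _ cU n, of F1 B1])
    show "F1 \<subseteq> Pow U" using AP by (auto simp: F1_def)
    show "B1 A \<subseteq> U - A \<and> real n / 2 \<le> real (card (B1 A))" if "A \<in> F1" for A
      using B1[OF that] by (simp add: c1_def)
    show "A' \<inter> B1 A = {}" if "A \<in> F1" "A' \<in> F1" "A \<subseteq> A'" for A A'
      using B1[OF that(1)] that(2,3) by (auto simp: c1_def F1_def)
  qed
  define G where "G = (\<lambda>A. U - A) ` F2"
  define B2 where "B2 = (\<lambda>D. SOME B'. c2 (U - D) B')"
  have F2c: "\<exists>B'. c2 A B'" if "A \<in> F2" for A using alt that by (auto simp: F2_def F1_def)
  have F2U: "A \<subseteq> U" if "A \<in> F2" for A using that AP by (auto simp: F2_def)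
  have B2: "c2 A (B2 (U - A))" if "A \<in> F2" for A
  proof -
    have "U - (U - A) = A" using F2U[OF that] by blast
    thus ?thesis using F2c[OF that] unfolding B2_def by (auto intro: someI_ex)
  qed
  have S2: "(\<Sum>D\<in>G. 1 / real (n choose card D)) \<le> 2"
  proof (rule chain_sum[OF fin _ cU n, of G B2])
    show "G \<subseteq> Pow U" by (auto simp: G_def)
    show "B2 D \<subseteq> U - D \<and> real n / 2 \<le> real (card (B2 D))" if DG: "D \<in> G" for D
    proof -
      obtain A where A: "A \<in> F2" "D = U - A" using DG unfolding G_def by blast
      have "U - D = A" using F2U[OF A(1)] A(2) by blast
      thus ?thesis using B2[OF A(1)] A(2) by (simp add: c2_def)
    qed
    show "D' \<inter> B2 D = {}" if DD: "D \<in> G" "D' \<in> G" "D \<subseteq> D'" for D D'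
    proof (rule ccontr)
      assume ne: "D' \<inter> B2 D \<noteq> {}"
      obtain A where A: "A \<in> F2" "D = U - A" using DD(1) unfolding G_def by blast
      obtain A' where A': "A' \<in> F2" "D' = U - A'" using DD(2) unfolding G_def by blast
      have sub: "A' \<subseteq> A" using DD(3) A A' F2U[OF A(1)] F2U[OF A'(1)] by blast
      have c: "c2 A (B2 D)" using B2[OF A(1)] A(2) by simp
      have "B2 D - A' \<noteq> {}" using ne A'(2) by blast
      hence "A' \<notin> \<A>" using c sub by (simp add: c2_def)
      thus False using A'(1) by (simp add: F2_def)
    qed
  qed
  have "(\<Sum>D\<in>G. 1 / real (n choose card D)) = (\<Sum>A\<in>F2. 1 / real (n choose card (U - A)))"
    unfolding G_def
  proof (rule sum.reindex_cong[of "\<lambda>A. U - A"])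
    show "inj_on (\<lambda>A. U - A) F2" using F2U by (auto simp: inj_on_def)
  qed auto
  also have "\<dots> = (\<Sum>A\<in>F2. 1 / real (n choose card A))"
  proof (rule sum.cong[OF refl])
    fix A assume "A \<in> F2"
    hence AU: "A \<subseteq> U" by (rule F2U)
    hence "card (U - A) = n - card A" using fin cU by (simp add: card_Diff_subset finite_subset)
    moreover have "card A \<le> n" using AU fin cU card_mono by blast
    ultimately show "1 / real (n choose card (U - A)) = 1 / real (n choose card A)"
      by (simp add: binomial_symmetric[symmetric])
  qed
  finally have S2': "(\<Sum>A\<in>F2. 1 / real (n choose card A)) \<le> 2" using S2 by simp
  have "(\<Sum>A\<in>\<A>. 1 / real (n choose card A))
      = (\<Sum>A\<in>F2. 1 / real (n choose card A)) + (\<Sum>A\<in>F1. 1 / real (n choose card A))"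
    unfolding F2_def by (rule sum.subset_diff) (use finA in \<open>auto simp: F1_def\<close>)
  thus ?thesis using S1 S2' by simp
qed

theorem proposition2p2:
  fixes p :: real
  assumes "0 < p" and "p < 1"
  shows "\<exists>C1::real. \<forall>n::nat. n \<ge> 1 \<longrightarrow> (\<forall>\<A>. sperner_family n \<A> \<longrightarrow>
           bernoulli_set_prob p n \<A> \<le> C1 / sqrt (real n))"
proof (intro exI allI impI)
  fix n :: nat and \<A> :: "nat set set"
  assume n: "1 \<le> n" and sp: "sperner_family n \<A>"
  define M where "M = 8 / sqrt (p * (1 - p) * n)"
  have AP: "\<A> \<subseteq> Pow {1..n}" using sp by (simp add: sperner_family_def)
  have eq: "\<A> \<inter> Pow {1..n} = \<A>" using AP by blast
  have trm: "p ^ card S * (1 - p) ^ (n - card S) \<le> M * (1 / real (n choose card S))"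
    if "S \<in> \<A>" for S
  proof -
    have kn: "card S \<le> n" using that AP card_mono[of "{1..n}" S] by auto
    have pos: "0 < real (n choose card S)" using kn by simp
    have "p ^ card S * (1 - p) ^ (n - card S) = bin p n (card S) / real (n choose card S)"
      using pos by (simp add: bin_def)
    also have "\<dots> \<le> M / real (n choose card S)"
      using bin_bound[OF assms n kn] pos by (intro divide_right_mono) (auto simp: M_def)
    finally show ?thesis by simp
  qed
  have M0: "0 \<le> M" using assms by (simp add: M_def)
  have "bernoulli_set_prob p n \<A> \<le> (\<Sum>S\<in>\<A>. M * (1 / real (n choose card S)))"
    unfolding bernoulli_set_prob_def eq using trm by (rule sum_mono)
  also have "\<dots> = M * (\<Sum>S\<in>\<A>. 1 / real (n choose card S))" by (simp add: sum_distrib_left)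
  also have "\<dots> \<le> M * 4" using family_sum[OF sp n] M0 by (intro mult_left_mono) auto
  also have "\<dots> = (32 / sqrt (p * (1 - p))) / sqrt (real n)"
    by (simp add: M_def real_sqrt_mult)
  finally show "bernoulli_set_prob p n \<A> \<le> (32 / sqrt (p * (1 - p))) / sqrt (real n)" .
qed


end
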